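(* Let $f(z)=z+\sum_{n=2}^{\infty}a_nz^n$ belong to $\mathcal{S}^*_{\xi}$. Then \[ |a_2|\le 1,\qquad |a_3|\le 1,\qquad |a_4|\le \frac{17}{18}. \] These bounds are sharp: each of them is attained with equality by some function in $\mathcal{S}^*_{\xi}$.
   Context: $\mathbb{D}=\{z\in\mathbb{C}:|z|<1\}$. $\mathcal{A}$ is the class of analytic functions $f$ on $\mathbb{D}$ of the form $f(z)=z+\sum_{n\ge2}a_nz^n$. For analytic $f,g$ on $\mathbb{D}$, $f\prec g$ (subordination) means there is an analytic $w:\mathbb{D}\to\mathbb{D}$ with $w(0)=0$ and $f=g\circ w$. Let $\xi(z)=1+\frac{\sin z}{1-z}$ for $z\in\mathbb{D}$, and $\mathcal{S}^*_{\xi}=\{f\in\mathcal{A}: \frac{zf'(z)}{f(z)}\prec \xi(z)\}$. *)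

theory Defs
  imports "HOL-Complex_Analysis.Complex_Analysis"
begin

definition unit_disc :: "complex set" where
  "unit_disc = ball 0 1"

definition classA :: "(complex \<Rightarrow> complex) \<Rightarrow> bool" where
  "classA f \<longleftrightarrow> f holomorphic_on unit_disc \<and> f 0 = 0 \<and> deriv f 0 = 1"

definition coeff_a :: "(complex \<Rightarrow> complex) \<Rightarrow> nat \<Rightarrow> complex" where
  "coeff_a f n = (deriv ^^ n) f 0 / of_nat (fact n)"

definition subordinate :: "(complex \<Rightarrow> complex) \<Rightarrow> (complex \<Rightarrow> complex) \<Rightarrow> bool" where
  "subordinate f g \<longleftrightarrow> f holomorphic_on unit_disc \<and> g holomorphic_on unit_disc \<and>
     (\<exists>w. w holomorphic_on unit_disc \<and> w ` unit_disc \<subseteq> unit_disc \<and> w 0 = 0 \<and>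
          (\<forall>z\<in>unit_disc. f z = g (w z)))"

definition xi :: "complex \<Rightarrow> complex" where
  "xi z = 1 + sin z / (1 - z)"

text \<open>z f'(z)/f(z), with its removable singularity at 0 filled in by the value 1.\<close>
definition starlike_quot :: "(complex \<Rightarrow> complex) \<Rightarrow> complex \<Rightarrow> complex" where
  "starlike_quot f z = (if z = 0 then 1 else z * deriv f z / f z)"

definition S_star_xi :: "(complex \<Rightarrow> complex) set" where
  "S_star_xi = {f. classA f \<and> subordinate (starlike_quot f) xi}"

end

theory Submission
  imports Defs
begin

lemma R_nonneg:
  fixes T q :: real
  assumes "0 \<le> T" "T \<le> 1" "0 \<le> q" "q \<le> 1"
  shows "0 \<le> 136/3 * (289/36*T^2 + 17/3*T*(11/6 + q*(1-T)) + (1-T)*((11/6+q)^2 - T*q*(49/4+q)))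
              - 49*((1-T)*q - 17/6*T)^2"
proof -
  have e: "136/3 * (289/36*T^2 + 17/3*T*(11/6 + q*(1-T)) + (1-T)*((11/6+q)^2 - T*q*(49/4+q)))
              - 49*((1-T)*q - 17/6*T)^2 = 4114/27 + 1496/9 * q - 11/3 * (q*(1-T))^2 + 8602/27 * T
           - 187 * (T*q) - 3179/108 * T^2 + 187/9 * (T^2 * q)"
    by (simp add: field_simps power2_eq_square)
  have "q*(1-T) \<le> 1" using assms by (simp add: mult_le_one)
  moreover have "0 \<le> q*(1-T)" using assms by simp
  ultimately have "(q*(1-T))^2 \<le> 1" by (simp add: power_le_one)
  moreover have "T*q \<le> T" using assms by (simp add: mult_left_le)
  moreover have "T^2 \<le> 1" using assms by (simp add: power_le_one)
  moreover have "0 \<le> T^2 * q" using assms by simp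
  ultimately show ?thesis unfolding e using assms by linarith
qed

lemma D_nonneg:
  fixes T q x :: real
  assumes "0 \<le> T" "T \<le> 1" "0 \<le> q" "q \<le> 1"
  shows "0 \<le> (289/36*T^2 + 17/3*T*(11/6 + q*(1-T)) + (1-T)*((11/6+q)^2 - T*q*(49/4+q)))
             + 7*T*((1-T)*q - 17/6*T) * x + 34/3*T^2 * x^2"
proof (cases "T = 0")
  case True
  then show ?thesis using assms by simp
next
  case False
  define A where "A = 289/36*T^2 + 17/3*T*(11/6 + q*(1-T)) + (1-T)*((11/6+q)^2 - T*q*(49/4+q))"
  define B where "B = 7*T*((1-T)*q - 17/6*T)"
  define C where "C = 34/3*T^2"
  have R: "0 \<le> 136/3 * A - 49*((1-T)*q - 17/6*T)^2"
    unfolding A_def using R_nonneg[OF assms] .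
  have id: "4*C*(A + B*x + C*x^2) = (2*C*x+B)^2 + T^2 * (136/3 * A - 49*((1-T)*q - 17/6*T)^2)"
    unfolding B_def C_def by (simp add: algebra_simps power2_eq_square)
  have "0 \<le> 4*C*(A + B*x + C*x^2)" unfolding id using R by simp
  moreover have "C > 0" unfolding C_def using False by simp
  ultimately have "0 \<le> A + B*x + C*x^2"
    by (simp add: zero_le_mult_iff)
  then show ?thesis unfolding A_def B_def C_def by simp
qed

lemma key_real:
  fixes t x y :: real
  assumes "0 \<le> t" "t \<le> 1" "x^2 + y^2 \<le> 1"
  shows "t * sqrt ((( 1-t^2)*(7/2*x - x^2 + y^2) + 17/6*t^2)^2 + ((1-t^2)*(7/2*y - 2*x*y))^2)
         \<le> 17/6 - (1-t^2)*(1 - (x^2+y^2))"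
proof -
  define T where "T = t^2"
  define q where "q = x^2+y^2"
  have T: "0 \<le> T" "T \<le> 1" unfolding T_def using assms by (auto simp: power_le_one)
  have q: "0 \<le> q" "q \<le> 1" unfolding q_def using assms by auto
  have D: "0 \<le> (289/36*T^2 + 17/3*T*(11/6 + q*(1-T)) + (1-T)*((11/6+q)^2 - T*q*(49/4+q)))
             + 7*T*((1-T)*q - 17/6*T) * x + 34/3*T^2 * x^2"
    using D_nonneg[OF T q] .
  have sq: "(t * sqrt ((( 1-t^2)*(7/2*x - x^2 + y^2) + 17/6*t^2)^2 + ((1-t^2)*(7/2*y - 2*x*y))^2))^2
     = t^2 * ((( 1-t^2)*(7/2*x - x^2 + y^2) + 17/6*t^2)^2 + ((1-t^2)*(7/2*y - 2*x*y))^2)"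
    by (simp add: power_mult_distrib)
  have id0: "(17/6 - (1-t^2)*(1 - (x^2+y^2)))^2 - t^2 * ((( 1-t^2)*(7/2*x - x^2 + y^2) + 17/6*t^2)^2 + ((1-t^2)*(7/2*y - 2*x*y))^2)
     = (1-T) * ((289/36*T^2 + 17/3*T*(11/6 + q*(1-T)) + (1-T)*((11/6+q)^2 - T*q*(49/4+q)))
             + 7*T*((1-T)*q - 17/6*T) * x + 34/3*T^2 * x^2)"
    unfolding T_def q_def
    by (simp add: field_simps power2_eq_square)
  note id = id0[folded sq]
  have "0 \<le> (1-T) * ((289/36*T^2 + 17/3*T*(11/6 + q*(1-T)) + (1-T)*((11/6+q)^2 - T*q*(49/4+q)))
             + 7*T*((1-T)*q - 17/6*T) * x + 34/3*T^2 * x^2)"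
    using T D by simp
  then have "(t * sqrt ((( 1-t^2)*(7/2*x - x^2 + y^2) + 17/6*t^2)^2 + ((1-t^2)*(7/2*y - 2*x*y))^2))^2
      \<le> (17/6 - (1-t^2)*(1 - (x^2+y^2)))^2" using id by linarith
  moreover have "0 \<le> 17/6 - (1-t^2)*(1 - (x^2+y^2))"
  proof -
    have "(1-t^2)*(1 - (x^2+y^2)) \<le> 1" using T q unfolding T_def q_def by (intro mult_le_one) auto
    then show ?thesis by simp
  qed
  ultimately show ?thesis using power2_le_imp_le by blast
qed

lemma norm_via_re_im: "norm (z::complex) = sqrt ((Re z)^2 + (Im z)^2)"
  by (rule norm_complex_def)

lemma key_real_form:
  fixes t :: real and b c :: complex
  assumes "0 \<le> t" "t \<le> 1" "norm c \<le> 1 - (norm b)^2"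
  shows "norm (of_real (1-t^2) * c - of_real (1-t^2) * of_real t * b^2
           + 7/2 * of_real t * of_real (1-t^2) * b + 17/6 * of_real t ^ 3) \<le> 17/6"
proof -
  define u where "u = 1 - t^2"
  define Y where "Y = of_real u * (7/2 * b - b^2) + 17/6 * of_real t ^ 2"
  have u: "0 \<le> u" "u \<le> 1" unfolding u_def using assms by (auto simp: power_le_one)
  have eq: "of_real (1-t^2) * c - of_real (1-t^2) * of_real t * b^2
           + 7/2 * of_real t * of_real (1-t^2) * b + 17/6 * of_real t ^ 3
         = of_real u * c + of_real t * Y"
    unfolding Y_def u_def by (simp add: algebra_simps power2_eq_square power3_eq_cube)
  have ReY: "Re Y = u*(7/2*Re b - (Re b)^2 + (Im b)^2) + 17/6*t^2"
    unfolding Y_def by (simp add: power2_eq_square algebra_simps)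
  have ImY: "Im Y = u*(7/2*Im b - 2*Re b*Im b)"
    unfolding Y_def by (simp add: power2_eq_square algebra_simps)
  have "(cmod b)^2 \<le> 1" using assms(3) norm_ge_zero[of c] by linarith
  then have nb: "(Re b)^2 + (Im b)^2 \<le> 1"
    by (simp add: cmod_power2)
  have kr: "t * norm Y \<le> 17/6 - u*(1 - ((Re b)^2+(Im b)^2))"
    using key_real[OF assms(1,2) nb] unfolding norm_via_re_im[of Y] ReY ImY u_def .
  have "norm (of_real u * c + of_real t * Y) \<le> norm (of_real u * c) + norm (of_real t * Y)"
    by (rule norm_triangle_ineq)
  also have "norm (of_real u * c) = u * norm c" using u by (simp add: norm_mult)
  also have "norm (of_real t * Y) = t * norm Y" using assms by (simp add: norm_mult)
  also have "u * norm c \<le> u * (1 - (cmod b)^2)"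
    using assms(3) u by (intro mult_left_mono) auto
  also have "(cmod b)^2 = (Re b)^2+(Im b)^2" by (rule cmod_power2)
  finally show ?thesis unfolding eq using kr by linarith
qed

lemma key_complex:
  fixes a b c :: complex
  assumes "norm a \<le> 1" "norm c \<le> 1 - (norm b)^2"
  shows "norm (of_real (1 - (norm a)^2) * c - of_real (1 - (norm a)^2) * cnj a * b^2
           + 7/2 * a * of_real (1 - (norm a)^2) * b + 17/6 * a ^ 3) \<le> 17/6"
proof (cases "a = 0")
  case True
  have "0 \<le> (norm b)^2" by simp
  then have "norm c \<le> 1" using assms(2) by linarith
  then show ?thesis using True by simp
next
  case False
  define t where "t = norm a"
  define e where "e = a / of_real t"
  have t: "0 < t" "t \<le> 1" unfolding t_def using assms False by auto
  have ne: "norm e = 1" unfolding e_def t_def using False by (simp add: norm_divide)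
  have e0: "e \<noteq> 0" using ne by auto
  have ae: "a = of_real t * e" unfolding e_def using t by simp
  have ce: "cnj e = 1 / e" using ne e0
  proof -
    have "e * cnj e = 1" using complex_norm_square[of e] ne by simp
    then show ?thesis using e0 by (simp add: field_simps)
  qed
  have ca: "cnj a = of_real t / e" unfolding ae using ce by simp
  define b' where "b' = b / e^2"
  define c' where "c' = c / e^3"
  have bb: "b = e^2 * b'" unfolding b'_def using e0 by simp
  have cc: "c = e^3 * c'" unfolding c'_def using e0 by simp
  have nb: "norm b' = norm b" unfolding b'_def using ne by (simp add: norm_divide norm_power)
  have nc: "norm c' = norm c" unfolding c'_def using ne by (simp add: norm_divide norm_power)
  have "of_real (1 - (norm a)^2) * c - of_real (1 - (norm a)^2) * cnj a * b^2
           + 7/2 * a * of_real (1 - (norm a)^2) * b + 17/6 * a ^ 3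
      = e^3 * (of_real (1-t^2) * c' - of_real (1-t^2) * of_real t * b'^2
           + 7/2 * of_real t * of_real (1-t^2) * b' + 17/6 * of_real t ^ 3)"
    unfolding ca bb cc t_def[symmetric] unfolding ae using e0
    by (simp add: field_simps power2_eq_square power3_eq_cube)
  then have "norm (of_real (1 - (norm a)^2) * c - of_real (1 - (norm a)^2) * cnj a * b^2
           + 7/2 * a * of_real (1 - (norm a)^2) * b + 17/6 * a ^ 3)
     = norm (of_real (1-t^2) * c' - of_real (1-t^2) * of_real t * b'^2
           + 7/2 * of_real t * of_real (1-t^2) * b' + 17/6 * of_real t ^ 3)"
    using ne by (simp add: norm_mult norm_power)
  also have "\<dots> \<le> 17/6"
    using t assms(2) nb nc by (intro key_real_form) auto
  finally show ?thesis .
qed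

lemma fps_mult_nth_2': fixes f g :: "'a::comm_semiring_1 fps" shows "(f * g) $ 2 = f$0 * g$2 + f$1 * g$1 + f$2 * g$0"
  by (simp add: fps_mult_nth eval_nat_numeral sum.atLeast0_atMost_Suc)
lemma fps_mult_nth_3': fixes f g :: "'a::comm_semiring_1 fps" shows "(f * g) $ 3 = f$0 * g$3 + f$1 * g$2 + f$2 * g$1 + f$3 * g$0"
  by (simp add: fps_mult_nth eval_nat_numeral sum.atLeast0_atMost_Suc)
lemma fps_mult_nth_4': fixes f g :: "'a::comm_semiring_1 fps" shows "(f * g) $ 4 = f$0 * g$4 + f$1 * g$3 + f$2 * g$2 + f$3 * g$1 + f$4 * g$0"
  by (simp add: fps_mult_nth eval_nat_numeral sum.atLeast0_atMost_Suc)

lemma fps_expansion_unique: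
  fixes f :: "complex \<Rightarrow> complex"
  assumes "f has_fps_expansion F" "f has_fps_expansion G"
  shows "F = G"
  by (rule fps_ext) (simp add: fps_nth_fps_expansion[OF assms(1)] fps_nth_fps_expansion[OF assms(2)])

lemma fps_expansion_eq_ev:
  fixes f g :: "complex \<Rightarrow> complex"
  assumes "f has_fps_expansion F" "g has_fps_expansion G" "eventually (\<lambda>z. f z = g z) (nhds 0)"
  shows "F = G"
proof -
  have "g has_fps_expansion F" using assms(1) has_fps_expansion_cong[OF assms(3) refl] by simp
  then show ?thesis using fps_expansion_unique assms(2) by blast
qed

lemma ev_ball: "eventually (\<lambda>z. z \<in> ball (0::complex) 1) (nhds 0)"
  by (intro eventually_nhds_in_open) auto

definition schwarz :: "(complex \<Rightarrow> complex) \<Rightarrow> bool" where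
  "schwarz w \<longleftrightarrow> w holomorphic_on ball 0 1 \<and> w 0 = 0 \<and> (\<forall>z\<in>ball 0 1. norm (w z) < 1)"

definition wc :: "(complex \<Rightarrow> complex) \<Rightarrow> nat \<Rightarrow> complex" where
  "wc w n = fps_expansion w 0 $ n"

lemma has_fps_ball:
  assumes "f holomorphic_on ball 0 1"
  shows "f has_fps_expansion fps_expansion f 0"
  using assms by (intro has_fps_expansion_fps_expansion) auto

lemma wc1: "wc w 1 = deriv w 0"
  by (simp add: wc_def fps_expansion_def)

lemma S1:
  assumes "schwarz w"
  shows "norm (wc w 1) \<le> 1"
    and "norm (wc w 1) = 1 \<Longrightarrow> \<exists>\<alpha>. (\<forall>z. norm z < 1 \<longrightarrow> w z = \<alpha> * z) \<and> norm \<alpha> = 1"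
  using assms Schwarz_Lemma(2,3)[of w 0] unfolding schwarz_def wc1 by auto

lemma linear_coeffs:
  assumes "\<forall>z. norm z < 1 \<longrightarrow> w z = \<alpha> * z"
  shows "fps_expansion w 0 = fps_const \<alpha> * fps_X"
proof -
  have h: "w holomorphic_on ball 0 1"
    by (rule holomorphic_transform[of "\<lambda>z. \<alpha> * z"]) (use assms in \<open>auto intro!: holomorphic_intros\<close>)
  have "(\<lambda>z. \<alpha> * z) has_fps_expansion fps_const \<alpha> * fps_X"
    by (intro fps_expansion_intros)
  moreover have "eventually (\<lambda>z. w z = \<alpha> * z) (nhds 0)"
    using ev_ball by eventually_elim (use assms in auto)
  ultimately show ?thesis using fps_expansion_eq_ev[OF has_fps_ball[OF h]] by blast
qed

lemma schur:
  assumes sw: "schwarz w" and a1: "norm (wc w 1) < 1"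
  shows "\<exists>\<phi>. schwarz \<phi> \<and> wc w 2 = of_real (1 - (norm (wc w 1))^2) * wc \<phi> 1
          \<and> wc w 3 = of_real (1 - (norm (wc w 1))^2) * wc \<phi> 2 - cnj (wc w 1) * wc w 2 * wc \<phi> 1"
proof -
  define a where "a = wc w 1"
  have hw: "w holomorphic_on ball 0 1" and w0: "w 0 = 0" and wlt: "\<And>z. z \<in> ball 0 1 \<Longrightarrow> norm (w z) < 1"
    using sw unfolding schwarz_def by auto
  have a_eq: "a = deriv w 0" unfolding a_def wc1 ..
  define g where "g = (\<lambda>z. if z = 0 then deriv w 0 else (w z - w 0) / (z - 0))"
  have hg: "g holomorphic_on ball 0 1"
    unfolding g_def by (rule pole_lemma[OF hw]) auto
  have gz: "g z * z = w z" for z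
    unfolding g_def using w0 by auto
  have g0: "g 0 = a" unfolding g_def a_eq by simp
  have glt: "norm (g z) < 1" if z: "z \<in> ball 0 1" for z
  proof (cases "z = 0")
    case True then show ?thesis using g0 a1 a_def by simp
  next
    case False
    have le: "norm (w z) \<le> norm z" using Schwarz_Lemma(1)[of w z] hw w0 wlt z by auto
    have "norm (w z) \<noteq> norm z"
    proof
      assume "norm (w z) = norm z"
      then obtain \<alpha> where "\<forall>z. norm z < 1 \<longrightarrow> w z = \<alpha> * z" "norm \<alpha> = 1"
        using Schwarz_Lemma(3)[of w z] hw w0 wlt z False by auto
      then have "fps_expansion w 0 = fps_const \<alpha> * fps_X" using linear_coeffs by blast
      then have "wc w 1 = \<alpha>" unfolding wc_def by simp
      then show False using a1 \<open>norm \<alpha> = 1\<close> by simp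
    qed
    then have "norm (w z) < norm z" using le by simp
    then show ?thesis using False gz[of z] by (simp add: norm_divide g_def w0)
  qed
  define u where "u = 1 - (norm a)^2"
  define \<phi> where "\<phi> = (\<lambda>z. (g z - a) / (1 - cnj a * g z))"
  have den: "1 - cnj a * g z \<noteq> 0" if "z \<in> ball 0 1" for z
  proof
    assume "1 - cnj a * g z = 0"
    then have "norm (cnj a * g z) = 1" by (metis eq_iff_diff_eq_0 norm_one)
    moreover have "norm (cnj a * g z) < 1"
    proof -
      have "norm a * norm (g z) \<le> norm a" using glt[OF that] by (intro mult_left_le) auto
      then show ?thesis using a1 a_def by (simp add: norm_mult)
    qed
    ultimately show False by simp
  qed
  have hphi: "\<phi> holomorphic_on ball 0 1"
    unfolding \<phi>_def using den by (intro holomorphic_intros hg) auto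
  have phi_lt: "norm (\<phi> z) < 1" if "z \<in> ball 0 1" for z
    using Moebius_function_norm_lt_1[of a "g z" 0] a1 glt[OF that] a_def
    by (simp add: Moebius_function_simple \<phi>_def)
  have phi0: "\<phi> 0 = 0" unfolding \<phi>_def g0 by simp
  have sphi: "schwarz \<phi>" unfolding schwarz_def using hphi phi0 phi_lt by auto
  define W where "W = fps_expansion w 0"
  define G where "G = fps_expansion g 0"
  define P where "P = fps_expansion \<phi> 0"
  have WG: "W = fps_X * G"
  proof -
    have "(\<lambda>z. z * g z) has_fps_expansion fps_X * G"
      unfolding G_def by (intro fps_expansion_intros has_fps_ball hg)
    moreover have "eventually (\<lambda>z. w z = z * g z) (nhds 0)"
      by (intro always_eventually allI) (metis gz mult.commute)
    ultimately show ?thesis unfolding W_def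
      using fps_expansion_eq_ev[OF has_fps_ball[OF hw]] by blast
  qed
  have G0: "G $ 0 = a" unfolding G_def fps_expansion_def using g0 by simp
  have PG: "P * (1 - fps_const (cnj a) * G) = G - fps_const a"
  proof -
    have "(\<lambda>z. \<phi> z * (1 - cnj a * g z)) has_fps_expansion P * (1 - fps_const (cnj a) * G)"
      unfolding G_def P_def by (intro fps_expansion_intros has_fps_ball hg hphi)
    moreover have "(\<lambda>z. g z - a) has_fps_expansion G - fps_const a"
      unfolding G_def by (intro fps_expansion_intros has_fps_ball hg)
    moreover have "eventually (\<lambda>z. \<phi> z * (1 - cnj a * g z) = g z - a) (nhds 0)"
      using ev_ball by eventually_elim (use den in \<open>auto simp: \<phi>_def\<close>)
    ultimately show ?thesis by (rule fps_expansion_eq_ev)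
  qed
  have P0: "P $ 0 = 0" unfolding P_def fps_expansion_def using phi0 by simp
  have c1: "P$1 * (1 - cnj a * a) = G$1"
    using arg_cong[OF PG, of "\<lambda>F. fps_nth F 1"] P0 G0 by (simp add: fps_mult_nth_1 algebra_simps)
  have c2: "P$1 * (- (cnj a * G$1)) + P$2 * (1 - cnj a * a) = G$2"
    using arg_cong[OF PG, of "\<lambda>F. fps_nth F 2"] P0 G0 by (simp add: fps_mult_nth_2' algebra_simps)
  have u: "of_real u = 1 - cnj a * a"
  proof -
    have "cnj a * a = of_real ((norm a)^2)" by (simp only: complex_norm_square mult.commute)
    then show ?thesis by (simp add: u_def)
  qed
  have W2: "W $ 2 = G $ 1" "W $ 3 = G $ 2" unfolding WG by (simp_all add: eval_nat_numeral)
  show ?thesis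
  proof (intro exI conjI)
    show "schwarz \<phi>" by fact
    show "wc w 2 = of_real (1 - (norm (wc w 1))^2) * wc \<phi> 1"
      unfolding a_def[symmetric] u_def[symmetric] u unfolding wc_def W_def[symmetric] P_def[symmetric] W2
      using c1 by (simp add: mult.commute)
    show "wc w 3 = of_real (1 - (norm (wc w 1))^2) * wc \<phi> 2 - cnj (wc w 1) * wc w 2 * wc \<phi> 1"
      unfolding a_def[symmetric] u_def[symmetric] u unfolding wc_def W_def[symmetric] P_def[symmetric] W2
      using c2 by (simp add: algebra_simps)
  qed
qed

lemma linear_wc:
  assumes "\<forall>z. norm z < 1 \<longrightarrow> w z = \<alpha> * z"
  shows "wc w 1 = \<alpha>" "wc w 2 = 0" "wc w 3 = 0"
  using linear_coeffs[OF assms] by (simp_all add: wc_def)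

lemma S2:
  assumes "schwarz w"
  shows "norm (wc w 2) \<le> 1 - (norm (wc w 1))^2"
proof (cases "norm (wc w 1) = 1")
  case True
  then obtain \<alpha> where "\<forall>z. norm z < 1 \<longrightarrow> w z = \<alpha> * z" using S1(2)[OF assms] by blast
  then show ?thesis using True linear_wc by simp
next
  case False
  then have lt: "norm (wc w 1) < 1" using S1(1)[OF assms] by simp
  obtain \<phi> where sp: "schwarz \<phi>" and e: "wc w 2 = of_real (1 - (norm (wc w 1))^2) * wc \<phi> 1"
    using schur[OF assms lt] by blast
  have u: "0 \<le> 1 - (norm (wc w 1))^2" using lt by (simp add: power_le_one)
  have "norm (wc w 2) = (1 - (norm (wc w 1))^2) * norm (wc \<phi> 1)"
    unfolding e norm_mult norm_of_real using u by simp
  also have "\<dots> \<le> (1 - (norm (wc w 1))^2) * 1"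
    using S1(1)[OF sp] u by (intro mult_left_mono) auto
  finally show ?thesis by simp
qed

lemma S3:
  assumes "schwarz w"
  shows "norm (wc w 3 + 7/2 * wc w 1 * wc w 2 + 17/6 * wc w 1 ^ 3) \<le> 17/6"
proof (cases "norm (wc w 1) = 1")
  case True
  then obtain \<alpha> where al: "\<forall>z. norm z < 1 \<longrightarrow> w z = \<alpha> * z" using S1(2)[OF assms] by blast
  note l = linear_wc[OF al]
  have "norm (wc w 3 + 7/2 * wc w 1 * wc w 2 + 17/6 * wc w 1 ^ 3) = 17/6 * norm (wc w 1) ^ 3"
    unfolding l(2,3) by (simp add: norm_mult norm_power)
  then show ?thesis using True by simp
next
  case False
  define a where "a = wc w 1"
  then have lt: "norm a < 1" using S1(1)[OF assms] False by simp
  obtain \<phi> where sp: "schwarz \<phi>" and e2: "wc w 2 = of_real (1 - (norm a)^2) * wc \<phi> 1"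
     and e3: "wc w 3 = of_real (1 - (norm a)^2) * wc \<phi> 2 - cnj a * wc w 2 * wc \<phi> 1"
    using schur[OF assms lt[unfolded a_def]] unfolding a_def by blast
  have "wc w 3 + 7/2 * wc w 1 * wc w 2 + 17/6 * wc w 1 ^ 3 =
     of_real (1 - (norm a)^2) * wc \<phi> 2 - of_real (1 - (norm a)^2) * cnj a * (wc \<phi> 1)^2
           + 7/2 * a * of_real (1 - (norm a)^2) * wc \<phi> 1 + 17/6 * a ^ 3"
    unfolding e3 e2 a_def[symmetric] by (simp add: field_simps power2_eq_square)
  also have "norm \<dots> \<le> 17/6"
    using lt S2[OF sp] by (intro key_complex) auto
  finally show ?thesis .
qed

lemma xi_holo: "xi holomorphic_on ball 0 1"
proof -
  have "1 - z \<noteq> 0" if "z \<in> ball (0::complex) 1" for z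
    using that by auto
  then show ?thesis unfolding xi_def[abs_def] by (intro holomorphic_intros) auto
qed

lemma xi_coeffs:
  "fps_expansion xi 0 $ 0 = 1" "fps_expansion xi 0 $ 1 = 1"
  "fps_expansion xi 0 $ 2 = 1" "fps_expansion xi 0 $ 3 = 5/6"
proof -
  define E where "E = fps_expansion xi 0"
  have hE: "xi has_fps_expansion E" unfolding E_def by (rule has_fps_ball[OF xi_holo])
  have "(\<lambda>z. (1 - z) * (xi z - 1)) has_fps_expansion (1 - fps_X) * (E - 1)"
    by (intro fps_expansion_intros hE)
  moreover have "(\<lambda>z::complex. sin z) has_fps_expansion fps_sin 1"
    using has_fps_expansion_sin[of "1::complex"] by simp
  moreover have "eventually (\<lambda>z. (1 - z) * (xi z - 1) = sin z) (nhds 0)"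
    using ev_ball
  proof eventually_elim
    case (elim z)
    then have "1 - z \<noteq> 0" by auto
    then show ?case by (simp add: xi_def)
  qed
  ultimately have eq: "(1 - fps_X) * (E - 1) = fps_sin 1" by (rule fps_expansion_eq_ev)
  have eq': "E - 1 - fps_X * (E - 1) = fps_sin 1" using eq by (simp add: algebra_simps)
  have n: "fps_nth (E - 1) n - (if n = 0 then 0 else fps_nth (E - 1) (n - 1)) = fps_nth (fps_sin 1) n" for n
    using arg_cong[OF eq', of "\<lambda>F. fps_nth F n"] by simp
  have s2: "fps_nth (fps_sin (1::complex)) 2 = 0" and s3: "fps_nth (fps_sin (1::complex)) 3 = -1/6"
    by (simp add: fps_sin_def) (simp add: fps_sin_def fact_numeral)
  have E0: "E $ 0 = 1" unfolding E_def fps_expansion_def by (simp add: xi_def)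
  show "fps_expansion xi 0 $ 0 = 1" using E0 E_def by simp
  have E1: "E $ 1 = 1" using n[of 1] E0 by simp
  then show "fps_expansion xi 0 $ 1 = 1" using E_def by simp
  have E2: "E $ 2 = 1" using n[of 2] E1 s2 by simp
  then show "fps_expansion xi 0 $ 2 = 1" using E_def by simp
  have "E $ 3 - 1 = -(1/6)" using n[of 3] E2 s3 by simp
  then have "E $ 3 = -(1/6) + 1" by (metis diff_add_cancel)
  then have "E $ 3 = 5/6" by simp
  then show "fps_expansion xi 0 $ 3 = 5/6" using E_def by simp
qed

lemma sum4: "sum (f::nat \<Rightarrow> 'a::comm_monoid_add) {0..3} = f 0 + f 1 + f 2 + f 3"
  by (simp add: eval_nat_numeral sum.atLeast0_atMost_Suc add.assoc)
lemma sum3: "sum (f::nat \<Rightarrow> 'a::comm_monoid_add) {0..2} = f 0 + f 1 + f 2"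
  by (simp add: eval_nat_numeral sum.atLeast0_atMost_Suc add.assoc)
lemma sum2: "sum (f::nat \<Rightarrow> 'a::comm_monoid_add) {0..1} = f 0 + f 1"
  by (simp add: sum.atLeast0_atMost_Suc)

lemma pow_coeffs:
  fixes W :: "complex fps"
  assumes W0: "W $ 0 = 0"
  shows "(W^2) $ 1 = 0" "(W^2) $ 2 = (W$1)^2" "(W^2) $ 3 = 2 * W$1 * W$2"
        "(W^3) $ 1 = 0" "(W^3) $ 2 = 0" "(W^3) $ 3 = (W$1)^3"
proof -
  have a: "(W*W) $ 1 = 0" "(W*W) $ 2 = (W$1)^2" "(W*W) $ 3 = 2 * W$1 * W$2" "(W*W) $ 0 = 0"
    using W0 by (simp_all add: fps_mult_nth_1 fps_mult_nth_2' fps_mult_nth_3' power2_eq_square)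
  have p2: "W^2 = W*W" by (simp add: power2_eq_square)
  have p3: "W^3 = W*(W*W)" by (simp add: power3_eq_cube)
  show "(W^2) $ 1 = 0" "(W^2) $ 2 = (W$1)^2" "(W^2) $ 3 = 2 * W$1 * W$2" unfolding p2 using a by simp_all
  show "(W^3) $ 1 = 0" unfolding p3 using a W0 by (simp add: fps_mult_nth_1)
  show "(W^3) $ 2 = 0" unfolding p3 using a W0 by (simp add: fps_mult_nth_2')
  show "(W^3) $ 3 = (W$1)^3" unfolding p3 using a W0 by (simp add: fps_mult_nth_3' power3_eq_cube power2_eq_square)
qed

lemma compose_coeffs:
  fixes E W :: "complex fps"
  assumes W0: "W $ 0 = 0"
  shows "fps_compose E W $ 1 = E$1 * W$1"
    "fps_compose E W $ 2 = E$1 * W$2 + E$2 * (W$1)^2"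
    "fps_compose E W $ 3 = E$1 * W$3 + 2 * E$2 * W$1 * W$2 + E$3 * (W$1)^3"
proof -
  note pc = pow_coeffs[OF W0]
  show "fps_compose E W $ 1 = E$1 * W$1"
    unfolding fps_compose_nth sum2 by simp
  show "fps_compose E W $ 2 = E$1 * W$2 + E$2 * (W$1)^2"
    unfolding fps_compose_nth sum3 using pc by simp
  show "fps_compose E W $ 3 = E$1 * W$3 + 2 * E$2 * W$1 * W$2 + E$3 * (W$1)^3"
    unfolding fps_compose_nth sum4 using pc by simp
qed

lemma main_coeffs:
  assumes fS: "f \<in> S_star_xi"
    and hw: "w holomorphic_on unit_disc" and w0: "w 0 = 0"
    and weq: "\<forall>z\<in>unit_disc. starlike_quot f z = xi (w z)"
  shows "coeff_a f 2 = wc w 1"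
    "coeff_a f 3 = (wc w 2 + 2 * wc w 1 ^ 2) / 2"
    "coeff_a f 4 = (wc w 3 + 7/2 * wc w 1 * wc w 2 + 17/6 * wc w 1 ^ 3) / 3"
proof -
  have hf: "f holomorphic_on ball 0 1" and f0: "f 0 = 0" and df0: "deriv f 0 = 1"
    and hp: "starlike_quot f holomorphic_on ball 0 1"
    using fS unfolding S_star_xi_def classA_def subordinate_def unit_disc_def by auto
  have hw': "w holomorphic_on ball 0 1" using hw unfolding unit_disc_def .
  define F where "F = fps_expansion f 0"
  define P where "P = fps_expansion (starlike_quot f) 0"
  define W where "W = fps_expansion w 0"
  define E where "E = fps_expansion xi 0"
  have ca: "coeff_a f n = F $ n" for n
    unfolding coeff_a_def F_def fps_expansion_def by simp
  have F0: "F $ 0 = 0" unfolding F_def fps_expansion_def using f0 by simp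
  have F1: "F $ 1 = 1" unfolding F_def fps_expansion_def using df0 by simp
  have P0: "P $ 0 = 1" unfolding P_def fps_expansion_def by (simp add: starlike_quot_def)
  have W0: "W $ 0 = 0" unfolding W_def fps_expansion_def using w0 by simp
  have PEW: "P = fps_compose E W"
  proof -
    have "(xi \<circ> w) has_fps_expansion fps_compose E W"
      unfolding E_def W_def
      by (rule has_fps_expansion_compose[OF has_fps_ball[OF xi_holo] has_fps_ball[OF hw']])
         (use W0 W_def in simp)
    moreover have "eventually (\<lambda>z. starlike_quot f z = (xi \<circ> w) z) (nhds 0)"
      using ev_ball by eventually_elim (use weq in \<open>auto simp: unit_disc_def\<close>)
    ultimately show ?thesis unfolding P_def using fps_expansion_eq_ev[OF has_fps_ball[OF hp]] by blast
  qed
  have FP: "F * P = fps_X * fps_deriv F"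
  proof -
    have "(\<lambda>z. f z * starlike_quot f z) has_fps_expansion F * P"
      unfolding F_def P_def by (intro fps_expansion_intros has_fps_ball hf hp)
    moreover have "(\<lambda>z. z * deriv f z) has_fps_expansion fps_X * fps_deriv F"
      unfolding F_def by (intro fps_expansion_intros has_fps_ball hf)
    moreover have "eventually (\<lambda>z. f z * starlike_quot f z = z * deriv f z) (nhds 0)"
    proof -
      have "f field_differentiable at 0"
        using hf by (intro holomorphic_on_imp_differentiable_at[of _ "ball 0 1"]) auto
      then have "(f has_field_derivative deriv f 0) (at 0)"
        using DERIV_deriv_iff_field_differentiable by blast
      then have "(f has_field_derivative 1) (at 0)" using df0 by simp
      then have "((\<lambda>y. (f y - f 0) / (y - 0)) \<longlongrightarrow> 1) (at 0)"
        using has_field_derivative_iff by blast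
      then have "eventually (\<lambda>y. (f y - f 0) / (y - 0) \<noteq> 0) (at 0)"
        by (rule tendsto_imp_eventually_ne) simp
      then have "eventually (\<lambda>z. f z * starlike_quot f z = z * deriv f z) (at 0)"
        by eventually_elim (auto simp: starlike_quot_def f0)
      then show ?thesis unfolding eventually_nhds_conv_at by (simp add: f0 starlike_quot_def)
    qed
    ultimately show ?thesis by (rule fps_expansion_eq_ev)
  qed
  have c: "fps_nth (F * P) n = fps_nth (fps_X * fps_deriv F) n" for n using FP by simp
  have c2: "F$2 = P$1" using c[of 2, unfolded fps_mult_nth_2'] F0 F1 P0 by (simp add: eval_nat_numeral)
  have c3: "2 * F$3 = P$2 + F$2 * P$1" using c[of 3, unfolded fps_mult_nth_3'] F0 F1 P0 by (simp add: eval_nat_numeral)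
  have c4: "3 * F$4 = P$3 + F$2 * P$2 + F$3 * P$1" using c[of 4, unfolded fps_mult_nth_4'] F0 F1 P0 by (simp add: eval_nat_numeral add.assoc)
  have E: "E$1 = 1" "E$2 = 1" "E$3 = 5/6" unfolding E_def using xi_coeffs by simp_all
  have P: "P$1 = W$1" "P$2 = W$2 + (W$1)^2" "P$3 = W$3 + 2 * W$1 * W$2 + 5/6 * (W$1)^3"
    unfolding PEW using compose_coeffs[OF W0, of E] E by simp_all
  have wcW: "wc w n = W $ n" for n unfolding wc_def W_def ..
  have f2: "F$2 = W$1" using c2 P by simp
  have f3: "F$3 = (W$2 + 2*(W$1)^2)/2" using c3 P f2 by (simp add: field_simps power2_eq_square)
  have f4: "F$4 = (W$3 + 7/2 * W$1 * W$2 + 17/6 * (W$1)^3) / 3"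
  proof -
    have "F$4 * 36 = 2 * (6 * W$3 + (W$1 * (W$2 * 21) + W$1 * (W$1 * (W$1 * 17))))"
      using c4 P f2 f3 by (simp add: field_simps power2_eq_square power3_eq_cube)
    then have "F$4 * 18 = 6 * W$3 + (W$1 * (W$2 * 21) + W$1 * (W$1 * (W$1 * 17)))"
      by algebra
    then show ?thesis by (simp add: field_simps power2_eq_square power3_eq_cube)
  qed
  show "coeff_a f 2 = wc w 1" unfolding ca wcW using f2 by simp
  show "coeff_a f 3 = (wc w 2 + 2 * wc w 1 ^ 2) / 2" unfolding ca wcW using f3 by simp
  show "coeff_a f 4 = (wc w 3 + 7/2 * wc w 1 * wc w 2 + 17/6 * wc w 1 ^ 3) / 3" unfolding ca wcW
    using f4 by simp
qed

lemma upper_bounds: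
  assumes fS: "f \<in> S_star_xi"
  shows "norm (coeff_a f 2) \<le> 1 \<and> norm (coeff_a f 3) \<le> 1 \<and> norm (coeff_a f 4) \<le> 17 / 18"
proof -
  obtain w where hw: "w holomorphic_on unit_disc" and wim: "w ` unit_disc \<subseteq> unit_disc"
    and w0: "w 0 = 0" and weq: "\<forall>z\<in>unit_disc. starlike_quot f z = xi (w z)"
    using fS unfolding S_star_xi_def subordinate_def by auto
  have sw: "schwarz w" unfolding schwarz_def using hw wim w0 unfolding unit_disc_def by auto
  note mc = main_coeffs[OF fS hw w0 weq]
  have n1: "norm (wc w 1) \<le> 1" by (rule S1(1)[OF sw])
  have n2: "norm (wc w 2) \<le> 1 - (norm (wc w 1))^2" by (rule S2[OF sw])
  have n3: "norm (wc w 3 + 7/2 * wc w 1 * wc w 2 + 17/6 * wc w 1 ^ 3) \<le> 17/6" by (rule S3[OF sw])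
  have a3: "norm (coeff_a f 3) \<le> 1"
  proof -
    have "norm (wc w 2 + 2 * wc w 1 ^ 2) \<le> norm (wc w 2) + 2 * (norm (wc w 1))^2"
      using norm_triangle_ineq[of "wc w 2" "2 * wc w 1 ^ 2"] by (simp add: norm_mult norm_power)
    also have "\<dots> \<le> 2" using n1 n2 by (smt (verit) power_le_one norm_ge_zero)
    finally show ?thesis unfolding mc(2) by (simp add: norm_divide)
  qed
  have a4: "norm (coeff_a f 4) \<le> 17/18"
    unfolding mc(3) using n3 by (simp add: norm_divide)
  show ?thesis using a3 a4 n1 mc(1) by simp
qed

lemma extremal_exists:
  "\<exists>f\<in>S_star_xi. coeff_a f 2 = 1 \<and> coeff_a f 3 = 1 \<and> coeff_a f 4 = 17/18"
proof -
  define D where "D = ball (0::complex) 1"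
  define s where "s = (\<lambda>z::complex. sin z / (1 - z))"
  have den: "1 - z \<noteq> 0" if "z \<in> D" for z using that unfolding D_def by auto
  have hs: "s holomorphic_on D" unfolding s_def using den by (intro holomorphic_intros) auto
  have s0: "s 0 = 0" unfolding s_def by simp
  have xis: "xi z = 1 + s z" for z unfolding xi_def s_def by simp
  define h where "h = (\<lambda>z. if z = 0 then deriv s 0 else (s z - s 0) / (z - 0))"
  have hh: "h holomorphic_on D" unfolding h_def by (rule pole_lemma[OF hs]) (auto simp: D_def)
  obtain G where G: "\<And>x. x \<in> D \<Longrightarrow> (G has_field_derivative h x) (at x within D)"
    using holomorphic_convex_primitive'[of D h] hh unfolding D_def by auto
  define H where "H = (\<lambda>z. G z - G 0)"
  have dH: "(H has_field_derivative h x) (at x)" if "x \<in> D" for x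
  proof -
    have "(G has_field_derivative h x) (at x)" using G[OF that] that
      by (simp add: D_def at_within_open[of x "ball 0 1"])
    then show ?thesis unfolding H_def by (auto intro!: derivative_eq_intros)
  qed
  have H0: "H 0 = 0" unfolding H_def by simp
  define f where "f = (\<lambda>z. z * exp (H z))"
  have df: "(f has_field_derivative (exp (H z) + z * h z * exp (H z))) (at z)" if "z \<in> D" for z
    unfolding f_def by (rule derivative_eq_intros dH[OF that] | simp add: algebra_simps)+
  have hf: "f holomorphic_on D"
  proof -
    have "\<forall>x\<in>D. \<exists>f'. (f has_field_derivative f') (at x)" using df by blast
    then show ?thesis unfolding D_def by (subst holomorphic_on_open) auto
  qed
  have derf: "deriv f z = exp (H z) + z * h z * exp (H z)" if "z \<in> D" for z
    using DERIV_imp_deriv[OF df[OF that]] .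
  have f0: "f 0 = 0" unfolding f_def by simp
  have df0: "deriv f 0 = 1" using derf[of 0] H0 by (simp add: D_def)
  have sq: "starlike_quot f z = xi z" if "z \<in> D" for z
  proof (cases "z = 0")
    case True then show ?thesis by (simp add: starlike_quot_def xi_def)
  next
    case False
    have "starlike_quot f z = z * (exp (H z) + z * h z * exp (H z)) / (z * exp (H z))"
      unfolding starlike_quot_def derf[OF that] using False by (simp add: f_def)
    also have "\<dots> = 1 + z * h z" using False by (simp add: field_simps)
    also have "z * h z = s z" unfolding h_def using False s0 by simp
    finally show ?thesis by (simp add: xis)
  qed
  have fS: "f \<in> S_star_xi"
    unfolding S_star_xi_def classA_def subordinate_def
  proof (intro CollectI conjI exI)
    show "f holomorphic_on unit_disc" using hf unfolding unit_disc_def D_def .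
    show "f 0 = 0" by fact
    show "deriv f 0 = 1" by fact
    show "starlike_quot f holomorphic_on unit_disc"
      unfolding unit_disc_def by (rule holomorphic_transform[OF xi_holo]) (use sq in \<open>auto simp: D_def\<close>)
    show "xi holomorphic_on unit_disc" using xi_holo unfolding unit_disc_def .
    show "(\<lambda>z. z) holomorphic_on unit_disc" by (rule holomorphic_intros)
    show "(\<lambda>z. z) ` unit_disc \<subseteq> unit_disc" by simp
    show "(\<lambda>z::complex. z) 0 = 0" by simp
    show "\<forall>z\<in>unit_disc. starlike_quot f z = xi z" using sq unfolding unit_disc_def D_def by simp
  qed
  have hid: "(\<lambda>z::complex. z) holomorphic_on unit_disc" by (rule holomorphic_intros)
  have weq: "\<forall>z\<in>unit_disc. starlike_quot f z = xi ((\<lambda>z. z) z)"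
    using sq unfolding unit_disc_def D_def by simp
  note mc = main_coeffs[OF fS hid _ weq]
  have l: "\<forall>z. norm z < 1 \<longrightarrow> (\<lambda>z::complex. z) z = 1 * z" by simp
  note lw = linear_wc[OF l]
  show ?thesis using fS mc lw by (intro bexI[of _ f]) auto
qed

theorem theorem3p2:
  shows "(\<forall>f\<in>S_star_xi. norm (coeff_a f 2) \<le> 1 \<and> norm (coeff_a f 3) \<le> 1
            \<and> norm (coeff_a f 4) \<le> 17 / 18)
       \<and> (\<exists>f\<in>S_star_xi. norm (coeff_a f 2) = 1)
       \<and> (\<exists>f\<in>S_star_xi. norm (coeff_a f 3) = 1)
       \<and> (\<exists>f\<in>S_star_xi. norm (coeff_a f 4) = 17 / 18)"
proof -
  obtain f where fS: "f \<in> S_star_xi" and c: "coeff_a f 2 = 1" "coeff_a f 3 = 1" "coeff_a f 4 = 17/18"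
    using extremal_exists by blast
  have "norm (coeff_a f 4) = norm (17/18::complex)" by (simp only: c)
  also have "\<dots> = 17/18" by (simp add: norm_divide)
  finally have n4: "norm (coeff_a f 4) = 17/18" .
  have n: "norm (coeff_a f 2) = 1" "norm (coeff_a f 3) = 1" using c by simp_all
  show ?thesis using upper_bounds fS n n4 by blast
qed

end
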